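(* The variety $\mathsf{V}(S_{(4,431)})$ is the ai-semiring variety defined by the identities $x^2y\approx xy$, $xy\approx yx$, $x^2\approx x^2+x$, $x+yz\approx x+yz+xyz$.
   Context: An ai-semiring is an algebra $(S,+,\cdot)$ with $(S,+)$ a semilattice, $(S,\cdot)$ a semigroup, and both distributive laws. $\mathsf{V}(S)$ is the variety generated by $S$; "the ai-semiring variety defined by identities $\Sigma$" is the class of all ai-semirings satisfying $\Sigma$. $S_{(4,431)}$ has carrier $\{1,2,3,4\}$; addition: $x+x=x$, $2+x=x$, $1+x=1$ for all $x$, $3+4=1$; multiplication (row $a$, column $b$ gives $a\cdot b$): row $1$: $1,2,1,1$; row $2$: $2,2,2,2$; row $3$: $1,2,1,1$; row $4$: $1,2,1,4$. *)

theory Defs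
  imports Main
begin

datatype trm = V nat | Pl trm trm (infixl "\<oplus>" 65) | Tm trm trm (infixl "\<odot>" 70)

fun eval :: "('a \<Rightarrow> 'a \<Rightarrow> 'a) \<Rightarrow> ('a \<Rightarrow> 'a \<Rightarrow> 'a) \<Rightarrow> (nat \<Rightarrow> 'a) \<Rightarrow> trm \<Rightarrow> 'a" where
  "eval ad mu \<nu> (V n) = \<nu> n"
| "eval ad mu \<nu> (Pl s t) = ad (eval ad mu \<nu> s) (eval ad mu \<nu> t)"
| "eval ad mu \<nu> (Tm s t) = mu (eval ad mu \<nu> s) (eval ad mu \<nu> t)"

definition satisfies :: "('a \<Rightarrow> 'a \<Rightarrow> 'a) \<Rightarrow> ('a \<Rightarrow> 'a \<Rightarrow> 'a) \<Rightarrow> trm \<Rightarrow> trm \<Rightarrow> bool" where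
  "satisfies ad mu s t \<longleftrightarrow> (\<forall>\<nu>. eval ad mu \<nu> s = eval ad mu \<nu> t)"

definition ai_semiring :: "('a \<Rightarrow> 'a \<Rightarrow> 'a) \<Rightarrow> ('a \<Rightarrow> 'a \<Rightarrow> 'a) \<Rightarrow> bool" where
  "ai_semiring ad mu \<longleftrightarrow>
     (\<forall>x y z. ad (ad x y) z = ad x (ad y z)) \<and>
     (\<forall>x y. ad x y = ad y x) \<and>
     (\<forall>x. ad x x = x) \<and>
     (\<forall>x y z. mu (mu x y) z = mu x (mu y z)) \<and>
     (\<forall>x y z. mu x (ad y z) = ad (mu x y) (mu x z)) \<and>
     (\<forall>x y z. mu (ad x y) z = ad (mu x z) (mu y z))"

text \<open>The four-element ai-semiring S_(4,431), elements e1..e4 standing for 1..4.\<close>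
datatype s4 = e1 | e2 | e3 | e4

fun s4_add :: "s4 \<Rightarrow> s4 \<Rightarrow> s4" where
  "s4_add e1 _ = e1"
| "s4_add _ e1 = e1"
| "s4_add e2 y = y"
| "s4_add x e2 = x"
| "s4_add e3 e3 = e3"
| "s4_add e4 e4 = e4"
| "s4_add e3 e4 = e1"
| "s4_add e4 e3 = e1"

fun s4_mul :: "s4 \<Rightarrow> s4 \<Rightarrow> s4" where
  "s4_mul e2 _ = e2"
| "s4_mul _ e2 = e2"
| "s4_mul e4 e4 = e4"
| "s4_mul _ _ = e1"

text \<open>A is in the variety V(S) generated by S iff A satisfies every identity of S
  (Birkhoff: V(S) = HSP(S) = Mod(Id(S))).\<close>
definition in_V_S4 :: "('a \<Rightarrow> 'a \<Rightarrow> 'a) \<Rightarrow> ('a \<Rightarrow> 'a \<Rightarrow> 'a) \<Rightarrow> bool" where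
  "in_V_S4 ad mu \<longleftrightarrow> (\<forall>s t. satisfies s4_add s4_mul s t \<longrightarrow> satisfies ad mu s t)"

end

theory Submission
  imports Defs
begin


fun fold1 :: "('a \<Rightarrow> 'a \<Rightarrow> 'a) \<Rightarrow> 'a list \<Rightarrow> 'a" where
  "fold1 f [] = undefined"
| "fold1 f [x] = x"
| "fold1 f (x # y # zs) = f x (fold1 f (y # zs))"

lemma fold1_Cons: "xs \<noteq> [] \<Longrightarrow> fold1 f (x # xs) = f x (fold1 f xs)"
  by (cases xs) auto

lemma fold1_append:
  assumes "\<forall>x y z. f (f x y) z = f x (f y z)"
  shows "xs \<noteq> [] \<Longrightarrow> ys \<noteq> [] \<Longrightarrow> fold1 f (xs @ ys) = f (fold1 f xs) (fold1 f ys)"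
proof (induction xs)
  case Nil then show ?case by simp
next
  case (Cons x xs)
  show ?case
  proof (cases "xs = []")
    case True then show ?thesis using Cons by (simp add: fold1_Cons)
  next
    case False then show ?thesis using Cons assms by (simp add: fold1_Cons)
  qed
qed

definition evalW :: "('a \<Rightarrow> 'a \<Rightarrow> 'a) \<Rightarrow> (nat \<Rightarrow> 'a) \<Rightarrow> nat list \<Rightarrow> 'a" where
  "evalW mu \<nu> a = fold1 mu (map \<nu> a)"

definition evalP :: "('a \<Rightarrow> 'a \<Rightarrow> 'a) \<Rightarrow> ('a \<Rightarrow> 'a \<Rightarrow> 'a) \<Rightarrow> (nat \<Rightarrow> 'a) \<Rightarrow> nat list list \<Rightarrow> 'a" where
  "evalP ad mu \<nu> P = fold1 ad (map (evalW mu \<nu>) P)"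

fun nf :: "trm \<Rightarrow> nat list list" where
  "nf (V n) = [[n]]"
| "nf (Pl s t) = nf s @ nf t"
| "nf (Tm s t) = concat (map (\<lambda>a. map (\<lambda>b. a @ b) (nf t)) (nf s))"

lemma nf_ne: "nf s \<noteq> [] \<and> (\<forall>a\<in>set (nf s). a \<noteq> [])"
  by (induction s) auto

lemma evalW_append:
  assumes "\<forall>x y z. mu (mu x y) z = mu x (mu y z)" "a \<noteq> []" "b \<noteq> []"
  shows "evalW mu \<nu> (a @ b) = mu (evalW mu \<nu> a) (evalW mu \<nu> b)"
  using fold1_append[OF assms(1)] assms(2,3) unfolding evalW_def by simp

lemma evalP_append:
  assumes "\<forall>x y z. ad (ad x y) z = ad x (ad y z)" "P \<noteq> []" "Q \<noteq> []"
  shows "evalP ad mu \<nu> (P @ Q) = ad (evalP ad mu \<nu> P) (evalP ad mu \<nu> Q)"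
  using fold1_append[OF assms(1)] assms(2,3) unfolding evalP_def by simp

lemma evalP_Cons: "P \<noteq> [] \<Longrightarrow> evalP ad mu \<nu> (p # P) = ad (evalW mu \<nu> p) (evalP ad mu \<nu> P)"
  unfolding evalP_def by (simp add: fold1_Cons)

lemma evalP_single: "evalP ad mu \<nu> [p] = evalW mu \<nu> p"
  unfolding evalP_def by simp

lemma eval_nf:
  assumes "ai_semiring ad mu"
  shows "eval ad mu \<nu> s = evalP ad mu \<nu> (nf s)"
proof -
  have aa: "\<forall>x y z. ad (ad x y) z = ad x (ad y z)" and ma: "\<forall>x y z. mu (mu x y) z = mu x (mu y z)"
    and dl: "\<forall>x y z. mu x (ad y z) = ad (mu x y) (mu x z)"
    and dr: "\<forall>x y z. mu (ad x y) z = ad (mu x z) (mu y z)"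
    using assms unfolding ai_semiring_def by auto
  have L1: "evalP ad mu \<nu> (map (\<lambda>b. a @ b) Q) = mu (evalW mu \<nu> a) (evalP ad mu \<nu> Q)"
    if "a \<noteq> []" "Q \<noteq> []" "\<forall>b\<in>set Q. b \<noteq> []" for a Q
    using that
  proof (induction Q)
    case Nil then show ?case by simp
  next
    case (Cons b Q)
    show ?case
    proof (cases "Q = []")
      case True then show ?thesis using Cons evalW_append[OF ma] by (simp add: evalP_single)
    next
      case False then show ?thesis using Cons evalW_append[OF ma] dl by (simp add: evalP_Cons)
    qed
  qed
  have L2: "evalP ad mu \<nu> (concat (map (\<lambda>a. map (\<lambda>b. a @ b) Q) P)) = mu (evalP ad mu \<nu> P) (evalP ad mu \<nu> Q)"
    if "P \<noteq> []" "\<forall>a\<in>set P. a \<noteq> []" "Q \<noteq> []" "\<forall>b\<in>set Q. b \<noteq> []" for P Q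
    using that
  proof (induction P)
    case Nil then show ?case by simp
  next
    case (Cons a P)
    show ?case
    proof (cases "P = []")
      case True then show ?thesis using Cons L1 by (simp add: evalP_single)
    next
      case False
      have "concat (map (\<lambda>a. map (\<lambda>b. a @ b) Q) P) \<noteq> []" using False Cons.prems(3) by (cases P) auto
      then show ?thesis using False Cons L1 evalP_append[OF aa] dr by (simp add: evalP_Cons)
    qed
  qed
  show ?thesis
  proof (induction s)
    case (V n) then show ?case by (simp add: evalP_single evalW_def)
  next
    case (Pl s t) then show ?case using evalP_append[OF aa] nf_ne by simp
  next
    case (Tm s t) then show ?case using L2 nf_ne by simp
  qed
qed



lemma s4_ai: "ai_semiring s4_add s4_mul"
proof -
  have 1: "s4_add (s4_add x y) z = s4_add x (s4_add y z)" for x y z by (cases x; cases y; cases z; simp)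
  have 2: "s4_add x y = s4_add y x" for x y by (cases x; cases y; simp)
  have 3: "s4_add x x = x" for x by (cases x; simp)
  have 4: "s4_mul (s4_mul x y) z = s4_mul x (s4_mul y z)" for x y z by (cases x; cases y; cases z; simp)
  have 5: "s4_mul x (s4_add y z) = s4_add (s4_mul x y) (s4_mul x z)" for x y z by (cases x; cases y; cases z; simp)
  have 6: "s4_mul (s4_add x y) z = s4_add (s4_mul x z) (s4_mul y z)" for x y z by (cases x; cases y; cases z; simp)
  show ?thesis unfolding ai_semiring_def using 1 2 3 4 5 6 by blast
qed

lemma W4: "a \<noteq> [] \<Longrightarrow>
   (evalW s4_mul \<nu> a = e2 \<longleftrightarrow> (\<exists>x\<in>set a. \<nu> x = e2)) \<and>
   (evalW s4_mul \<nu> a = e4 \<longleftrightarrow> (\<forall>x\<in>set a. \<nu> x = e4)) \<and>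
   (evalW s4_mul \<nu> a = e3 \<longleftrightarrow> (\<exists>x. a = [x] \<and> \<nu> x = e3))"
proof (induction a)
  case Nil then show ?case by simp
next
  case (Cons x a)
  show ?case
  proof (cases "a = []")
    case True then show ?thesis by (simp add: evalW_def)
  next
    case False
    have e: "evalW s4_mul \<nu> (x # a) = s4_mul (\<nu> x) (evalW s4_mul \<nu> a)"
      using False by (simp add: evalW_def fold1_Cons)
    show ?thesis using Cons False unfolding e
      by (cases "\<nu> x"; cases "evalW s4_mul \<nu> a"; auto)
  qed
qed

lemma P4: "xs \<noteq> [] \<Longrightarrow>
   (fold1 s4_add xs = e2 \<longleftrightarrow> (\<forall>x\<in>set xs. x = e2)) \<and>
   (fold1 s4_add xs = e4 \<longleftrightarrow> (\<forall>x\<in>set xs. x = e2 \<or> x = e4) \<and> e4 \<in> set xs) \<and>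
   (fold1 s4_add xs = e3 \<longleftrightarrow> (\<forall>x\<in>set xs. x = e2 \<or> x = e3) \<and> e3 \<in> set xs)"
proof (induction xs)
  case Nil then show ?case by simp
next
  case (Cons x xs)
  show ?case
  proof (cases "xs = []")
    case True then show ?thesis by (cases x) auto
  next
    case False
    show ?thesis using Cons False unfolding fold1_Cons[OF False]
      by (cases x; cases "fold1 s4_add xs"; auto)
  qed
qed

lemma P4_24: assumes "xs \<noteq> []" "\<forall>x\<in>set xs. x = e2 \<or> x = e4"
  shows "fold1 s4_add xs = e2 \<or> fold1 s4_add xs = e4"
proof (cases "\<forall>x\<in>set xs. x = e2")
  case True then show ?thesis using P4[OF assms(1)] by blast
next
  case False then have "e4 \<in> set xs" using assms(2) by auto
  then show ?thesis using P4[OF assms(1)] assms(2) by blast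
qed

lemma P4_23: assumes "xs \<noteq> []" "\<forall>x\<in>set xs. x = e2 \<or> x = e3"
  shows "fold1 s4_add xs = e2 \<or> fold1 s4_add xs = e3"
proof (cases "\<forall>x\<in>set xs. x = e2")
  case True then show ?thesis using P4[OF assms(1)] by blast
next
  case False then have "e3 \<in> set xs" using assms(2) by auto
  then show ?thesis using P4[OF assms(1)] assms(2) by blast
qed

lemma extract_cond:
  assumes eq: "\<And>\<nu>. evalP s4_add s4_mul \<nu> u = evalP s4_add s4_mul \<nu> v"
    and une: "u \<noteq> []" "\<forall>p\<in>set u. p \<noteq> []" and vne: "v \<noteq> []" "\<forall>p\<in>set v. p \<noteq> []"
    and w: "w \<in> set v"
  shows "\<forall>y\<in>set w. \<exists>p\<in>set u. set p \<subseteq> set w \<and> y \<in> set p"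
    and "length w \<ge> 2 \<Longrightarrow> \<exists>p\<in>set u. set p \<subseteq> set w \<and> length p \<ge> 2"
proof -
  have wne: "w \<noteq> []" using w vne by auto
  show "\<forall>y\<in>set w. \<exists>p\<in>set u. set p \<subseteq> set w \<and> y \<in> set p"
  proof (intro ballI, rule ccontr)
    fix y assume y: "y \<in> set w" and no: "\<not> (\<exists>p\<in>set u. set p \<subseteq> set w \<and> y \<in> set p)"
    define \<nu> where "\<nu> = (\<lambda>x. if x = y then e1 else if x \<in> set w then e4 else e2)"
    have ww: "evalW s4_mul \<nu> w \<noteq> e2 \<and> evalW s4_mul \<nu> w \<noteq> e4"
      using W4[OF wne, of \<nu>] y unfolding \<nu>_def by auto
    have "evalP s4_add s4_mul \<nu> v \<noteq> e2 \<and> evalP s4_add s4_mul \<nu> v \<noteq> e4"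
      using P4[of "map (evalW s4_mul \<nu>) v"] vne ww w unfolding evalP_def by auto
    moreover have "\<forall>p\<in>set u. evalW s4_mul \<nu> p = e2 \<or> evalW s4_mul \<nu> p = e4"
    proof
      fix p assume p: "p \<in> set u"
      show "evalW s4_mul \<nu> p = e2 \<or> evalW s4_mul \<nu> p = e4"
      proof (cases "set p \<subseteq> set w")
        case True then have "y \<notin> set p" using no p by auto
        then have "\<forall>x\<in>set p. \<nu> x = e4" using True unfolding \<nu>_def by auto
        then show ?thesis using W4[of p \<nu>] une p by auto
      next
        case False then obtain x where "x \<in> set p" "x \<notin> set w" by auto
        then have "\<nu> x = e2" using y unfolding \<nu>_def by auto
        then show ?thesis using W4[of p \<nu>] une p \<open>x \<in> set p\<close> by auto
      qed
    qed
    then have "evalP s4_add s4_mul \<nu> u = e2 \<or> evalP s4_add s4_mul \<nu> u = e4"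
      using P4_24[of "map (evalW s4_mul \<nu>) u"] une unfolding evalP_def by auto
    ultimately show False using eq by metis
  qed
  show "\<exists>p\<in>set u. set p \<subseteq> set w \<and> length p \<ge> 2" if lw: "length w \<ge> 2"
  proof (rule ccontr)
    assume no: "\<not> (\<exists>p\<in>set u. set p \<subseteq> set w \<and> length p \<ge> 2)"
    define \<nu> where "\<nu> = (\<lambda>x. if x \<in> set w then e3 else e2)"
    have nsg: "\<not> (\<exists>x. w = [x])" using lw by auto
    have ww: "evalW s4_mul \<nu> w \<noteq> e2 \<and> evalW s4_mul \<nu> w \<noteq> e3"
      using W4[OF wne, of \<nu>] nsg unfolding \<nu>_def by auto
    have "evalP s4_add s4_mul \<nu> v \<noteq> e2 \<and> evalP s4_add s4_mul \<nu> v \<noteq> e3"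
      using P4[of "map (evalW s4_mul \<nu>) v"] vne ww w unfolding evalP_def by auto
    moreover have "\<forall>p\<in>set u. evalW s4_mul \<nu> p = e2 \<or> evalW s4_mul \<nu> p = e3"
    proof
      fix p assume p: "p \<in> set u"
      show "evalW s4_mul \<nu> p = e2 \<or> evalW s4_mul \<nu> p = e3"
      proof (cases "set p \<subseteq> set w")
        case True then have "length p < 2" using no p by auto
        then obtain x where "p = [x]" using une p by (cases p; cases "tl p") auto
        then show ?thesis using True unfolding \<nu>_def by (simp add: evalW_def)
      next
        case False then obtain x where "x \<in> set p" "x \<notin> set w" by auto
        then have "\<nu> x = e2" unfolding \<nu>_def by auto
        then show ?thesis using W4[of p \<nu>] une p \<open>x \<in> set p\<close> by auto
      qed
    qed
    then have "evalP s4_add s4_mul \<nu> u = e2 \<or> evalP s4_add s4_mul \<nu> u = e3"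
      using P4_23[of "map (evalW s4_mul \<nu>) u"] une unfolding evalP_def by auto
    ultimately show False using eq by metis
  qed
qed



context
  fixes ad mu :: "'a \<Rightarrow> 'a \<Rightarrow> 'a"
  assumes aa: "\<And>x y z. ad (ad x y) z = ad x (ad y z)"
    and ac: "\<And>x y. ad x y = ad y x"
    and ai: "\<And>x. ad x x = x"
    and ma: "\<And>x y z. mu (mu x y) z = mu x (mu y z)"
    and mc: "\<And>x y. mu x y = mu y x"
    and i1: "\<And>x y. mu (mu x x) y = mu x y"
    and i3: "\<And>x. mu x x = ad (mu x x) x"
    and i4: "\<And>x y z. ad x (mu y z) = ad (ad x (mu y z)) (mu (mu x y) z)"
begin

lemma acl: "ad x (ad y z) = ad y (ad x z)" using aa ac by metis
lemma ail: "ad x (ad x y) = ad x y" using aa ai by metis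
lemma mcl: "mu x (mu y z) = mu y (mu x z)" using ma mc by metis

lemmas adac = aa ac acl ai ail
lemmas muac = ma mc mcl

lemma wapp: "a \<noteq> [] \<Longrightarrow> b \<noteq> [] \<Longrightarrow> evalW mu \<nu> (a @ b) = mu (evalW mu \<nu> a) (evalW mu \<nu> b)"
  using evalW_append[of mu] ma by blast

lemma wsingle: "evalW mu \<nu> [x] = \<nu> x" by (simp add: evalW_def)

lemma absorb1:
  assumes "length a \<ge> 2" "x \<in> set a"
  shows "mu (evalW mu \<nu> a) (\<nu> x) = evalW mu \<nu> a"
proof -
  obtain a1 a2 where a: "a = a1 @ x # a2" using assms(2) by (meson split_list)
  have ne: "a1 @ a2 \<noteq> []" using assms(1) a by auto
  define R where "R = evalW mu \<nu> (a1 @ a2)"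
  have e: "evalW mu \<nu> a = mu (\<nu> x) R"
  proof (cases "a1 = []")
    case True then show ?thesis using a ne wapp[of "[x]" a2] unfolding R_def by (simp add: wsingle)
  next
    case f1: False
    show ?thesis
    proof (cases "a2 = []")
      case True then show ?thesis using a f1 wapp[of a1 "[x]"] unfolding R_def by (simp add: wsingle mc)
    next
      case False
      have "evalW mu \<nu> a = mu (evalW mu \<nu> a1) (mu (\<nu> x) (evalW mu \<nu> a2))"
        using a f1 False wapp[of a1 "x # a2"] wapp[of "[x]" a2] by (simp add: wsingle)
      also have "\<dots> = mu (\<nu> x) R" unfolding R_def using f1 False wapp[of a1 a2] by (simp add: muac)
      finally show ?thesis .
    qed
  qed
  have "mu (mu (\<nu> x) R) (\<nu> x) = mu (mu (\<nu> x) (\<nu> x)) R" by (simp add: muac)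
  then show ?thesis unfolding e using i1 by simp
qed

lemma absorb_list:
  assumes "length a \<ge> 2" "b \<noteq> []" "set b \<subseteq> set a"
  shows "mu (evalW mu \<nu> a) (evalW mu \<nu> b) = evalW mu \<nu> a"
  using assms(2,3)
proof (induction b)
  case Nil then show ?case by simp
next
  case (Cons x b)
  show ?case
  proof (cases "b = []")
    case True then show ?thesis using Cons absorb1[OF assms(1)] by (simp add: wsingle)
  next
    case False
    have "evalW mu \<nu> (x # b) = mu (\<nu> x) (evalW mu \<nu> b)" using wapp[of "[x]" b] False by (simp add: wsingle)
    have "mu (evalW mu \<nu> a) (evalW mu \<nu> (x # b)) = mu (mu (evalW mu \<nu> a) (\<nu> x)) (evalW mu \<nu> b)"
      unfolding \<open>evalW mu \<nu> (x # b) = _\<close> by (rule ma[symmetric])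
    also have "\<dots> = evalW mu \<nu> a" using Cons False absorb1[OF assms(1), of x] by simp
    finally show ?thesis .
  qed
qed

lemma word_eq:
  assumes "length a \<ge> 2" "length b \<ge> 2" "set a = set b"
  shows "evalW mu \<nu> a = evalW mu \<nu> b"
proof -
  have "a \<noteq> []" "b \<noteq> []" using assms by auto
  have 1: "mu (evalW mu \<nu> a) (evalW mu \<nu> b) = evalW mu \<nu> a" using absorb_list[OF assms(1), of b] assms(3) \<open>b \<noteq> []\<close> by simp
  have 2: "mu (evalW mu \<nu> b) (evalW mu \<nu> a) = evalW mu \<nu> b" using absorb_list[OF assms(2), of a] assms(3) \<open>a \<noteq> []\<close> by simp
  show ?thesis using 1 2 mc[of "evalW mu \<nu> a" "evalW mu \<nu> b"] by simp
qed

lemma le_evalP: "p \<in> set P \<Longrightarrow> ad (evalW mu \<nu> p) (evalP ad mu \<nu> P) = evalP ad mu \<nu> P"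
proof (induction P)
  case Nil then show ?case by simp
next
  case (Cons q P)
  show ?case
  proof (cases "P = []")
    case True then show ?thesis using Cons by (simp add: evalP_single ai)
  next
    case False
    have "p = q \<or> p \<in> set P" using Cons.prems by simp
    then show ?thesis
    proof
      assume "p = q" then show ?thesis using False by (simp add: evalP_Cons ail)
    next
      assume "p \<in> set P" then show ?thesis using False Cons.IH acl[of "evalW mu \<nu> p" "evalW mu \<nu> q"]
        by (simp add: evalP_Cons)
    qed
  qed
qed

lemma step:
  assumes "length q \<ge> 2" "ad (evalW mu \<nu> q) U = U" "p \<noteq> []" "ad (evalW mu \<nu> p) U = U"
  shows "ad (evalW mu \<nu> (q @ p)) U = U"
proof -
  obtain a q2 where q0: "q = a # q2" using assms(1) by (cases q) auto
  then have q: "q = a # q2" "q2 \<noteq> []" using assms(1) by auto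
  define P Q2 where "P = evalW mu \<nu> p" and "Q2 = evalW mu \<nu> q2"
  have eq: "evalW mu \<nu> q = mu (\<nu> a) Q2" unfolding Q2_def using q wapp[of "[a]" q2] by (simp add: wsingle)
  have e: "evalW mu \<nu> (q @ p) = mu (mu P (\<nu> a)) Q2"
    using wapp[of q p] q assms(3) eq unfolding P_def by (simp add: muac)
  have pq: "ad (ad P (mu (\<nu> a) Q2)) U = U" using assms(2,4) eq unfolding P_def by (metis aa)
  have "ad (mu (mu P (\<nu> a)) Q2) U = ad (mu (mu P (\<nu> a)) Q2) (ad (ad P (mu (\<nu> a) Q2)) U)" using pq by simp
  also have "\<dots> = ad (ad (ad P (mu (\<nu> a) Q2)) (mu (mu P (\<nu> a)) Q2)) U" by (simp add: adac)
  also have "\<dots> = U" using i4[of P "\<nu> a" Q2, symmetric] pq by simp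
  finally show ?thesis using e by simp
qed

lemma word_le:
  assumes une: "u \<noteq> []" "\<forall>p\<in>set u. p \<noteq> []" and wne: "w \<noteq> []"
    and c2: "\<forall>y\<in>set w. \<exists>p\<in>set u. set p \<subseteq> set w \<and> y \<in> set p"
    and c3: "length w \<ge> 2 \<Longrightarrow> \<exists>p\<in>set u. set p \<subseteq> set w \<and> length p \<ge> 2"
  shows "ad (evalW mu \<nu> w) (evalP ad mu \<nu> u) = evalP ad mu \<nu> u"
proof (cases "length w \<ge> 2")
  case False
  then obtain x where w: "w = [x]" using wne by (cases w; cases "tl w") auto
  obtain p where p: "p \<in> set u" "set p \<subseteq> {x}" "x \<in> set p" using c2 w by auto
  show ?thesis
  proof (cases "length p \<ge> 2")
    case False
    then have "p = [x]" using p by (cases p; cases "tl p") auto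
    then show ?thesis using le_evalP[OF p(1)] w by simp
  next
    case True
    have "set p = set [x, x]" using p by auto
    then have ep: "evalW mu \<nu> p = mu (\<nu> x) (\<nu> x)" using word_eq[OF True, of "[x,x]"] wapp[of "[x]" "[x]"]
      by (simp add: wsingle)
    have U: "ad (mu (\<nu> x) (\<nu> x)) (evalP ad mu \<nu> u) = evalP ad mu \<nu> u" using le_evalP[OF p(1), of \<nu>] ep by simp
    have "ad (\<nu> x) (evalP ad mu \<nu> u) = ad (\<nu> x) (ad (mu (\<nu> x) (\<nu> x)) (evalP ad mu \<nu> u))" using U by simp
    also have "\<dots> = ad (ad (mu (\<nu> x) (\<nu> x)) (\<nu> x)) (evalP ad mu \<nu> u)" by (simp add: adac)
    also have "\<dots> = evalP ad mu \<nu> u" using i3[of "\<nu> x", symmetric] U by simp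
    finally show ?thesis using w by (simp add: wsingle)
  qed
next
  case True
  define U where "U = evalP ad mu \<nu> u"
  obtain q where q: "q \<in> set u" "set q \<subseteq> set w" "length q \<ge> 2" using c3 True by auto
  have "\<exists>r. length r \<ge> 2 \<and> set r \<subseteq> set w \<and> set ys \<subseteq> set r \<and> ad (evalW mu \<nu> r) U = U"
    if "set ys \<subseteq> set w" for ys
    using that
  proof (induction ys)
    case Nil then show ?case using q le_evalP[OF q(1), of \<nu>] unfolding U_def by auto
  next
    case (Cons y ys)
    then obtain r where r: "length r \<ge> 2" "set r \<subseteq> set w" "set ys \<subseteq> set r" "ad (evalW mu \<nu> r) U = U" by auto
    obtain p where p: "p \<in> set u" "set p \<subseteq> set w" "y \<in> set p" using c2 Cons.prems by auto
    have "ad (evalW mu \<nu> (r @ p)) U = U" using step[OF r(1) r(4)] p une le_evalP[OF p(1)] unfolding U_def by auto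
    then show ?case using r p by (intro exI[of _ "r @ p"]) auto
  qed
  then obtain r where r: "length r \<ge> 2" "set r \<subseteq> set w" "set w \<subseteq> set r" "ad (evalW mu \<nu> r) U = U" by blast
  have "evalW mu \<nu> r = evalW mu \<nu> w" using word_eq[OF r(1) True] r(2,3) by auto
  then show ?thesis using r(4) unfolding U_def by simp
qed

lemma poly_le:
  assumes "v \<noteq> []" "\<forall>w\<in>set v. ad (evalW mu \<nu> w) U = U"
  shows "ad (evalP ad mu \<nu> v) U = U"
  using assms
proof (induction v)
  case Nil then show ?case by simp
next
  case (Cons w v)
  show ?case
  proof (cases "v = []")
    case True then show ?thesis using Cons by (simp add: evalP_single)
  next
    case False then show ?thesis using Cons by (simp add: evalP_Cons aa)
  qed
qed

lemma main_eq:
  assumes eq: "\<And>\<nu>. evalP s4_add s4_mul \<nu> u = evalP s4_add s4_mul \<nu> v"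
    and une: "u \<noteq> []" "\<forall>p\<in>set u. p \<noteq> []" and vne: "v \<noteq> []" "\<forall>p\<in>set v. p \<noteq> []"
  shows "evalP ad mu \<nu> u = evalP ad mu \<nu> v"
proof -
  have 1: "ad (evalP ad mu \<nu> v) (evalP ad mu \<nu> u) = evalP ad mu \<nu> u"
  proof (rule poly_le[OF vne(1)], rule ballI)
    fix w assume w: "w \<in> set v"
    show "ad (evalW mu \<nu> w) (evalP ad mu \<nu> u) = evalP ad mu \<nu> u"
      using word_le[OF une, of w] extract_cond[OF eq une vne w] w vne by auto
  qed
  have 2: "ad (evalP ad mu \<nu> u) (evalP ad mu \<nu> v) = evalP ad mu \<nu> v"
  proof (rule poly_le[OF une(1)], rule ballI)
    fix w assume w: "w \<in> set u"
    show "ad (evalW mu \<nu> w) (evalP ad mu \<nu> v) = evalP ad mu \<nu> v"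
      using word_le[OF vne, of w] extract_cond[OF eq[symmetric] vne une w] w une by auto
  qed
  show ?thesis using 1 2 ac by metis
qed

end



theorem proposition7p4:
  fixes ad mu :: "'a \<Rightarrow> 'a \<Rightarrow> 'a"
  assumes "ai_semiring ad mu"
  shows "in_V_S4 ad mu \<longleftrightarrow>
    (satisfies ad mu ((V 0 \<odot> V 0) \<odot> V 1) (V 0 \<odot> V 1) \<and>
     satisfies ad mu (V 0 \<odot> V 1) (V 1 \<odot> V 0) \<and>
     satisfies ad mu (V 0 \<odot> V 0) ((V 0 \<odot> V 0) \<oplus> V 0) \<and>
     satisfies ad mu (V 0 \<oplus> (V 1 \<odot> V 2)) ((V 0 \<oplus> (V 1 \<odot> V 2)) \<oplus> ((V 0 \<odot> V 1) \<odot> V 2)))"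
  (is "_ \<longleftrightarrow> ?I1 \<and> ?I2 \<and> ?I3 \<and> ?I4")
proof
  assume H: "in_V_S4 ad mu"
  have s: "satisfies s4_add s4_mul ((V 0 \<odot> V 0) \<odot> V 1) (V 0 \<odot> V 1) \<and>
     satisfies s4_add s4_mul (V 0 \<odot> V 1) (V 1 \<odot> V 0) \<and>
     satisfies s4_add s4_mul (V 0 \<odot> V 0) ((V 0 \<odot> V 0) \<oplus> V 0) \<and>
     satisfies s4_add s4_mul (V 0 \<oplus> (V 1 \<odot> V 2)) ((V 0 \<oplus> (V 1 \<odot> V 2)) \<oplus> ((V 0 \<odot> V 1) \<odot> V 2))"
  proof -
    have a: "s4_mul (s4_mul x x) y = s4_mul x y" for x y by (cases x; cases y; simp)
    have b: "s4_mul x y = s4_mul y x" for x y by (cases x; cases y; simp)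
    have c: "s4_mul x x = s4_add (s4_mul x x) x" for x by (cases x; simp)
    have d: "s4_add x (s4_mul y z) = s4_add (s4_add x (s4_mul y z)) (s4_mul (s4_mul x y) z)" for x y z
      by (cases x; cases y; cases z; simp)
    show ?thesis unfolding satisfies_def using a b c d by simp
  qed
  then show "?I1 \<and> ?I2 \<and> ?I3 \<and> ?I4" using H unfolding in_V_S4_def by blast
next
  assume I: "?I1 \<and> ?I2 \<and> ?I3 \<and> ?I4"
  have aa: "\<And>x y z. ad (ad x y) z = ad x (ad y z)" and ac: "\<And>x y. ad x y = ad y x"
    and ai: "\<And>x. ad x x = x" and ma: "\<And>x y z. mu (mu x y) z = mu x (mu y z)"
    using assms unfolding ai_semiring_def by auto
  have i1: "\<And>x y. mu (mu x x) y = mu x y"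
  proof -
    fix x y show "mu (mu x x) y = mu x y"
      using I unfolding satisfies_def by (auto dest: spec[of _ "(!) [x, y, y]"])
  qed
  have mc: "\<And>x y. mu x y = mu y x"
  proof -
    fix x y show "mu x y = mu y x"
      using I unfolding satisfies_def by (auto dest: spec[of _ "(!) [x, y, y]"])
  qed
  have i3: "\<And>x. mu x x = ad (mu x x) x"
  proof -
    fix x show "mu x x = ad (mu x x) x"
      using I unfolding satisfies_def by (auto dest: spec[of _ "(!) [x, x, x]"])
  qed
  have i4: "\<And>x y z. ad x (mu y z) = ad (ad x (mu y z)) (mu (mu x y) z)"
  proof -
    fix x y z show "ad x (mu y z) = ad (ad x (mu y z)) (mu (mu x y) z)"
      using I unfolding satisfies_def by (auto dest: spec[of _ "(!) [x, y, z]"])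
  qed
  show "in_V_S4 ad mu"
    unfolding in_V_S4_def
  proof (intro allI impI)
    fix s t assume st: "satisfies s4_add s4_mul s t"
    have eq4: "\<And>\<nu>. evalP s4_add s4_mul \<nu> (nf s) = evalP s4_add s4_mul \<nu> (nf t)"
      using st unfolding satisfies_def by (simp add: eval_nf[OF s4_ai])
    show "satisfies ad mu s t"
      unfolding satisfies_def eval_nf[OF assms]
      using main_eq[of ad mu, OF aa ac ai ma mc i1 i3 i4 eq4] nf_ne by blast
  qed
qed


end
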